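(* A topological space $X$ is $\alpha_1$ if and only if, for each $x\in X$, player ONE does not have a winning strategy in the game $\alpha_1^{\mathrm{game}}(X,x)$.
   Context: Convention: a "sequence" is a countably infinite set; a countably infinite set $A$ converges to $x$ if $x\notin A$ and every neighborhood of $x$ contains all but finitely many elements of $A$. $X$ is $\alpha_1$ if for each $x\in X$ and all pairwise disjoint sequences $S_1,S_2,\dots\subseteq X$ each converging to $x$, there is a sequence $S\subseteq\bigcup_nS_n$ converging to $x$ such that $S_n\setminus S$ is finite for all $n$. The game $\alpha_1^{\mathrm{game}}(X,x)$ is played by ONE and TWO in innings $n\in\mathbb N$: in the $n$-th inning ONE chooses a sequence $S_n\subseteq X$ converging to $x$, and TWO responds with a cofinite subset $T_n\subseteq S_n$. TWO wins if $\bigcup_nT_n$ converges to $x$; otherwise ONE wins. *)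

theory Defs
  imports "HOL-Analysis.Analysis"
begin

text \<open>A "sequence" is a countably infinite set. A sequence A converges to x in X
  if x is not in A and every open neighbourhood of x contains all but finitely many
  elements of A.\<close>
definition seq_converges :: "'a topology \<Rightarrow> 'a set \<Rightarrow> 'a \<Rightarrow> bool" where
  "seq_converges X A x \<longleftrightarrow>
     A \<subseteq> topspace X \<and> countable A \<and> infinite A \<and> x \<notin> A \<and>
     (\<forall>U. openin X U \<and> x \<in> U \<longrightarrow> finite (A - U))"

definition alpha1 :: "'a topology \<Rightarrow> bool" where
  "alpha1 X \<longleftrightarrow>
     (\<forall>x \<in> topspace X. \<forall>S :: nat \<Rightarrow> 'a set.
        (\<forall>n. seq_converges X (S n) x) \<and> disjoint_family S \<longrightarrow>
        (\<exists>T. T \<subseteq> (\<Union>n. S n) \<and> seq_converges X T x \<and> (\<forall>n. finite (S n - T))))"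

text \<open>A strategy for ONE in the game alpha1-game(X,x) chooses its move in inning n
  from the list of TWO's previous responses [T_0,...,T_(n-1)].
  A play where TWO responds legally (T_n a cofinite subset of ONE's move) is given by
  the sequence T of TWO's moves.\<close>
definition ONE_winning_strategy :: "'a topology \<Rightarrow> 'a \<Rightarrow> ('a set list \<Rightarrow> 'a set) \<Rightarrow> bool" where
  "ONE_winning_strategy X x \<sigma> \<longleftrightarrow>
     (\<forall>T :: nat \<Rightarrow> 'a set.
        (\<forall>n. T n \<subseteq> \<sigma> (map T [0..<n]) \<and> finite (\<sigma> (map T [0..<n]) - T n)) \<longrightarrow>
        (\<forall>n. seq_converges X (\<sigma> (map T [0..<n])) x) \<and>
        \<not> seq_converges X (\<Union>n. T n) x)"

end

theory Submission
  imports Defs "HOL-Library.Infinite_Set"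
begin

lemma conv_subset:
  assumes "seq_converges X B x" "A \<subseteq> B" "infinite A"
  shows "seq_converges X A x"
  using assms unfolding seq_converges_def
  by (meson countable_subset finite_subset Diff_mono order_refl subset_iff)

lemma conv_Un:
  assumes "seq_converges X A x" "seq_converges X B x"
  shows "seq_converges X (A \<union> B) x"
  using assms unfolding seq_converges_def
  by (auto simp: Un_Diff)

lemma conv_UN_finite:
  fixes S :: "nat \<Rightarrow> 'a set"
  assumes "\<And>m. m \<le> N \<Longrightarrow> seq_converges X (S m) x"
  shows "seq_converges X (\<Union>m\<le>N. S m) x"
  using assms
proof (induction N arbitrary: S)
  case 0 then show ?case by simp
next
  case (Suc N)
  have "(\<Union>m\<le>Suc N. S m) = (\<Union>m\<le>N. S m) \<union> S (Suc N)"
    by (auto simp: atMost_Suc)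
  then show ?case using Suc conv_Un by (metis le_Suc_eq)
qed

lemma S_sub_D:
  fixes S :: "nat \<Rightarrow> 'a set"
  shows "S n \<subseteq> (\<Union>m\<le>n. S m - (\<Union>k<m. S k))"
proof
  fix y assume y: "y \<in> S n"
  define m where "m = (LEAST m. y \<in> S m)"
  have "y \<in> S m" unfolding m_def using y by (rule LeastI)
  moreover have "m \<le> n" unfolding m_def using y by (rule Least_le)
  moreover have "\<forall>k<m. y \<notin> S k" unfolding m_def using not_less_Least by blast
  ultimately show "y \<in> (\<Union>m\<le>n. S m - (\<Union>k<m. S k))" by blast
qed

lemma alpha1_general:
  fixes S :: "nat \<Rightarrow> 'a set"
  assumes a: "alpha1 X" and x: "x \<in> topspace X"
    and S: "\<And>n. seq_converges X (S n) x"
  shows "\<exists>B. seq_converges X B x \<and> (\<forall>n. finite (S n - B))"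
proof -
  define D where "D m = S m - (\<Union>k<m. S k)" for m
  have SD: "S n \<subseteq> (\<Union>m\<le>n. D m)" for n unfolding D_def by (rule S_sub_D)
  have Dsub: "D m \<subseteq> S m" for m unfolding D_def by auto
  have disjD: "disjoint_family D"
    unfolding disjoint_family_on_def D_def
    by (metis (no_types, lifting) Diff_iff UN_I disjoint_iff lessThan_iff linorder_neqE_nat)
  define I where "I = {m. infinite (D m)}"
  show ?thesis
  proof (cases "finite I")
    case True
    then obtain N where N: "\<forall>m\<in>I. m < N"
      by (metis finite_nat_bounded lessThan_iff subset_eq)
    define B where "B = (\<Union>m\<le>N. S m)"
    have "seq_converges X B x" unfolding B_def by (rule conv_UN_finite) (use S in auto)
    moreover have "finite (S n - B)" for n
    proof -
      have "S n - B \<subseteq> (\<Union>m\<in>{N<..n}. D m)"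
        using SD[of n] Dsub unfolding B_def by fastforce
      moreover have "finite (D m)" if "m > N" for m using N that I_def by force
      ultimately show ?thesis by (meson finite_UN_I finite_greaterThanAtMost finite_subset greaterThanAtMost_iff)
    qed
    ultimately show ?thesis by blast
  next
    case False
    define E where "E k = D (enumerate I k)" for k
    have injE: "inj (enumerate I)" using False by (rule inj_enumerate)
    have "disjoint_family E"
      using disjD injE unfolding disjoint_family_on_def E_def inj_def by blast
    moreover have "seq_converges X (E k) x" for k
    proof -
      have "enumerate I k \<in> I" using False by (rule enumerate_in_set)
      then show ?thesis unfolding E_def I_def
        using conv_subset[OF S Dsub] by auto
    qed
    ultimately obtain T where T: "seq_converges X T x" "\<forall>k. finite (E k - T)"
      using a x unfolding alpha1_def by blast
    have "finite (D m - T)" for m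
    proof (cases "m \<in> I")
      case True
      then obtain k where "enumerate I k = m" using enumerate_Ex False by blast
      then show ?thesis using T(2) E_def by auto
    next
      case False then show ?thesis unfolding I_def by auto
    qed
    then have "finite (S n - T)" for n
    proof -
      have "S n - T \<subseteq> (\<Union>m\<le>n. D m - T)" using SD[of n] by blast
      then show ?thesis by (meson \<open>\<And>m. finite (D m - T)\<close> finite_UN_I finite_atMost finite_subset)
    qed
    then show ?thesis using T(1) by blast
  qed
qed

definition legal :: "('a set list \<Rightarrow> 'a set) \<Rightarrow> 'a set list \<Rightarrow> bool" where
  "legal \<sigma> q \<longleftrightarrow> (\<forall>i<length q. q!i \<subseteq> \<sigma> (take i q) \<and> finite (\<sigma> (take i q) - q!i))"

lemma legal_Nil[simp]: "legal \<sigma> []" unfolding legal_def by simp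

lemma legal_snoc:
  "legal \<sigma> (q @ [t]) \<longleftrightarrow> legal \<sigma> q \<and> t \<subseteq> \<sigma> q \<and> finite (\<sigma> q - t)"
  unfolding legal_def
  by (auto simp: nth_append less_Suc_eq)

fun L :: "('a set list \<Rightarrow> 'a set) \<Rightarrow> nat \<Rightarrow> 'a set list" where
  "L \<tau> 0 = []"
| "L \<tau> (Suc k) = L \<tau> k @ [\<tau> (L \<tau> k)]"

lemma map_L: "map (\<lambda>k. \<tau> (L \<tau> k)) [0..<n] = L \<tau> n"
  by (induction n) auto

lemma legal_L:
  assumes "\<And>q. legal \<sigma> q \<Longrightarrow> \<tau> q \<subseteq> \<sigma> q \<and> finite (\<sigma> q - \<tau> q)"
  shows "legal \<sigma> (L \<tau> n)"
  by (induction n) (auto simp: legal_snoc assms)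

lemma play_of:
  assumes "\<And>q. legal \<sigma> q \<Longrightarrow> \<tau> q \<subseteq> \<sigma> q \<and> finite (\<sigma> q - \<tau> q)"
    and "ONE_winning_strategy X x \<sigma>"
  shows "(\<forall>n. seq_converges X (\<sigma> (L \<tau> n)) x) \<and> \<not> seq_converges X (\<Union>n. \<tau> (L \<tau> n)) x"
proof -
  let ?T = "\<lambda>k. \<tau> (L \<tau> k)"
  have "\<forall>n. ?T n \<subseteq> \<sigma> (map ?T [0..<n]) \<and> finite (\<sigma> (map ?T [0..<n]) - ?T n)"
    using assms(1) legal_L[OF assms(1)] by (simp add: map_L)
  note w = assms(2)[unfolded ONE_winning_strategy_def, THEN spec[of _ ?T], THEN mp, OF this]
  then show ?thesis unfolding map_L .
qed

lemma winning_conv: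
  assumes w: "ONE_winning_strategy X x \<sigma>" and p: "legal \<sigma> p"
  shows "seq_converges X (\<sigma> p) x"
proof -
  define \<tau> where "\<tau> q = (if length q < length p \<and> q = take (length q) p then p ! length q else \<sigma> q)" for q
  have leg: "\<tau> q \<subseteq> \<sigma> q \<and> finite (\<sigma> q - \<tau> q)" if "legal \<sigma> q" for q
  proof (cases "length q < length p \<and> q = take (length q) p")
    case True
    then have "\<tau> q = p ! length q" unfolding \<tau>_def by simp
    moreover have "take (length q) p = q" using True by simp
    moreover have "p ! length q \<subseteq> \<sigma> (take (length q) p) \<and> finite (\<sigma> (take (length q) p) - p ! length q)"
      using p True unfolding legal_def by blast
    ultimately show ?thesis by simp
  next
    case False
    have "\<tau> q = \<sigma> q" unfolding \<tau>_def by (rule if_not_P[OF False])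
    then show ?thesis by simp
  qed
  have "k \<le> length p \<Longrightarrow> L \<tau> k = take k p" for k
  proof (induction k)
    case 0 then show ?case by simp
  next
    case (Suc k)
    then have "L \<tau> k = take k p" by simp
    moreover have "\<tau> (take k p) = p ! k" using Suc.prems unfolding \<tau>_def by auto
    ultimately show ?case using Suc.prems by (simp add: take_Suc_conv_app_nth)
  qed
  then have "L \<tau> (length p) = p" by simp
  moreover have "seq_converges X (\<sigma> (L \<tau> (length p))) x" using play_of[OF leg w] by blast
  ultimately show ?thesis by simp
qed

lemma countable_legal:
  assumes "\<And>q. legal \<sigma> q \<Longrightarrow> countable (\<sigma> q)"
  shows "countable {q. legal \<sigma> q}"
proof -
  define P where "P n = {q. legal \<sigma> q \<and> length q = n}" for n
  have "countable (P n)" for n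
  proof (induction n)
    case 0
    have "P 0 = {[]}" unfolding P_def by auto
    then show ?case by simp
  next
    case (Suc n)
    have "P (Suc n) \<subseteq> (\<lambda>(q,F). q @ [\<sigma> q - F]) ` (SIGMA q:P n. {F. finite F \<and> F \<subseteq> \<sigma> q})"
    proof
      fix r assume "r \<in> P (Suc n)"
      then obtain q t where r: "r = q @ [t]" "legal \<sigma> (q @ [t])" "length q = n"
        unfolding P_def by (metis (mono_tags, lifting) length_Suc_conv_rev mem_Collect_eq)
      then have "t \<subseteq> \<sigma> q" "finite (\<sigma> q - t)" "legal \<sigma> q" by (auto simp: legal_snoc)
      moreover have "t = \<sigma> q - (\<sigma> q - t)" using \<open>t \<subseteq> \<sigma> q\<close> by blast
      ultimately show "r \<in> (\<lambda>(q,F). q @ [\<sigma> q - F]) ` (SIGMA q:P n. {F. finite F \<and> F \<subseteq> \<sigma> q})"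
        using r unfolding P_def by (intro image_eqI[of _ _ "(q, \<sigma> q - t)"]) auto
    qed
    moreover have "countable (SIGMA q:P n. {F. finite F \<and> F \<subseteq> \<sigma> q})"
      using Suc.IH assms by (intro countable_SIGMA countable_Collect_finite_subset) (auto simp: P_def)
    ultimately show ?case by (meson countable_image countable_subset)
  qed
  moreover have "{q. legal \<sigma> q} = (\<Union>n. P n)" unfolding P_def by auto
  ultimately show ?thesis by auto
qed

theorem lemma2p13:
  fixes X :: "'a topology"
  shows "alpha1 X \<longleftrightarrow> (\<forall>x \<in> topspace X. \<not> (\<exists>\<sigma>. ONE_winning_strategy X x \<sigma>))"
proof
  assume a: "alpha1 X"
  show "\<forall>x \<in> topspace X. \<not> (\<exists>\<sigma>. ONE_winning_strategy X x \<sigma>)"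
  proof (intro ballI notI, elim exE)
    fix x \<sigma> assume x: "x \<in> topspace X" and w: "ONE_winning_strategy X x \<sigma>"
    have conv: "legal \<sigma> q \<Longrightarrow> seq_converges X (\<sigma> q) x" for q using winning_conv[OF w] .
    define F where "F = \<sigma> ` {q. legal \<sigma> q}"
    have cF: "countable F" unfolding F_def
      using countable_legal[of \<sigma>] conv unfolding seq_converges_def by auto
    have neF: "F \<noteq> {}" unfolding F_def using legal_Nil[of \<sigma>] by blast
    define S where "S = from_nat_into F"
    have rS: "range S = F" unfolding S_def using cF neF by simp
    have "seq_converges X (S n) x" for n
      using rS conv unfolding F_def by (metis (mono_tags, lifting) imageE mem_Collect_eq rangeI)
    then obtain B where B: "seq_converges X B x" "\<forall>n. finite (S n - B)"
      using alpha1_general[OF a x] by blast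
    have fin: "finite (\<sigma> q - B)" if "legal \<sigma> q" for q
    proof -
      have "\<sigma> q \<in> range S" using rS that unfolding F_def by auto
      then show ?thesis using B(2) by auto
    qed
    define \<tau> where "\<tau> q = \<sigma> q \<inter> B" for q
    have leg: "\<tau> q \<subseteq> \<sigma> q \<and> finite (\<sigma> q - \<tau> q)" if "legal \<sigma> q" for q
      using fin[OF that] unfolding \<tau>_def by (simp add: Diff_Int)
    have nc: "\<not> seq_converges X (\<Union>n. \<tau> (L \<tau> n)) x" using play_of[OF leg w] by blast
    have sub: "(\<Union>n. \<tau> (L \<tau> n)) \<subseteq> B" unfolding \<tau>_def by auto
    have "infinite (\<tau> [])"
    proof
      assume "finite (\<tau> [])"
      moreover have "finite (\<sigma> [] - B)" using fin by simp
      ultimately have "finite (\<sigma> [])" unfolding \<tau>_def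
        by (metis Diff_Diff_Int Diff_empty finite_Diff2 inf_commute)
      then show False using conv[of "[]"] unfolding seq_converges_def by simp
    qed
    moreover have "\<tau> [] \<subseteq> (\<Union>n. \<tau> (L \<tau> n))" by (metis L.simps(1) UN_upper UNIV_I)
    ultimately have "infinite (\<Union>n. \<tau> (L \<tau> n))" using finite_subset by blast
    then show False using conv_subset[OF B(1) sub] nc by blast
  qed
next
  assume h: "\<forall>x \<in> topspace X. \<not> (\<exists>\<sigma>. ONE_winning_strategy X x \<sigma>)"
  show "alpha1 X" unfolding alpha1_def
  proof (intro ballI allI impI)
    fix x and S :: "nat \<Rightarrow> 'a set"
    assume x: "x \<in> topspace X" and S: "(\<forall>n. seq_converges X (S n) x) \<and> disjoint_family S"
    show "\<exists>T. T \<subseteq> (\<Union>n. S n) \<and> seq_converges X T x \<and> (\<forall>n. finite (S n - T))"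
    proof (rule ccontr)
      assume nT: "\<not> ?thesis"
      have "ONE_winning_strategy X x (\<lambda>l. S (length l))"
        unfolding ONE_winning_strategy_def
      proof (intro allI impI conjI)
        fix T :: "nat \<Rightarrow> 'a set" and n
        show "seq_converges X (S (length (map T [0..<n]))) x" using S by simp
      next
        fix T :: "nat \<Rightarrow> 'a set"
        assume T: "\<forall>n. T n \<subseteq> S (length (map T [0..<n])) \<and> finite (S (length (map T [0..<n])) - T n)"
        have "(\<Union>n. T n) \<subseteq> (\<Union>n. S n)" using T by auto
        moreover have "finite (S n - (\<Union>n. T n))" for n
        proof -
          have "S n - (\<Union>n. T n) \<subseteq> S n - T n" by blast
          moreover have "finite (S n - T n)" using T[rule_format, of n] by simp
          ultimately show ?thesis by (rule finite_subset)
        qed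
        ultimately show "\<not> seq_converges X (\<Union>n. T n) x" using nT by blast
      qed
      then show False using h x by blast
    qed
  qed
qed

end
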